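(* Let $n\geqslant 3$ and let $G$ (gene tree) and $S$ (species tree) be caterpillar trees with leaves bijectively labeled by the same set of $n$ labels, not necessarily of the same labeled topology. Number the internal nodes of $G$ by $1,\dots,n-1$ from the cherry to the root. For $1\leqslant j\leqslant n-1$, let $L_j$ be the set of labels of the $j+1$ leaves descended from node $j$ in $G$, let $T_j(G,S)$ be the smallest subtree of $S$ (rooted at a node of $S$ and containing all its descendants) having every label of $L_j$ on one of its leaves, and let $d_j$ be the number of edges separating the root of $T_j(G,S)$ from the root of $S$. For $1\leqslant j\leqslant n-2$ put $c_j=d_j-d_{j+1}$. Then the number of coalescent histories for $(G,S)$ equals $$\sum_{k_1=1}^{1}\ \sum_{k_2=1}^{k_1+c_{n-2}}\ \sum_{k_3=1}^{k_2+c_{n-3}}\cdots\sum_{k_{n-1}=1}^{k_{n-2}+c_{1}} 1,$$ i.e. the summation over $k_m$ ($2\leqslant m\leqslant n-1$) runs from $1$ to $k_{m-1}+c_{n-m}$; in particular this number depends only on the vector $(c_1,\dots,c_{n-2})$, which is a function of the topologies of $G$ and $S$.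
   Context: All trees are binary, rooted, leaf-labeled. A caterpillar tree is one in which some internal node is descended from all other internal nodes; it has a unique cherry (internal node with exactly two descendant leaves). Internal edge $i$ of a caterpillar is the edge immediately above internal node $i$ (nodes numbered $1,\dots,n-1$ from cherry to root), with an extra edge $n-1$ above the root. A coalescent history for $(G,S)$ on the same label set is a map $h$ from internal nodes of $G$ to internal edges of $S$ (including the edge above the root) such that (1) every label of a leaf below node $v$ of $G$ labels a leaf of $S$ below edge $h(v)$, and (2) if $v_2$ is descended from $v_1$ in $G$ then $h(v_2)$ is descended from $h(v_1)$ in $S$ (nodes and edges count as descended from themselves). *)

theory Defs
  imports Main "HOL-Library.FuncSet"
begin

text \<open>A caterpillar tree with n leaves on label set X is encoded by a list xs of the
n distinct labels: xs!0 and xs!1 form the cherry, internal node i (1 \<le> i \<le> n-1,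
numbered from the cherry to the root) has as descendant leaves exactly the first i+1
entries of xs, and the internal edge i (the edge immediately above node i; edge n-1 is
the extra edge above the root) has the same leaves below it.\<close>

definition cat_clade :: "'a list \<Rightarrow> nat \<Rightarrow> 'a set" where
  "cat_clade xs i = set (take (Suc i) xs)"

text \<open>Coalescent histories for (G,S): maps from internal nodes 1..n-1 of G to internal
edges 1..n-1 of S. In a caterpillar, node/edge a is descended from node/edge b iff a \<le> b.\<close>

definition is_coal_hist :: "'a list \<Rightarrow> 'a list \<Rightarrow> (nat \<Rightarrow> nat) \<Rightarrow> bool" where
  "is_coal_hist G S h \<longleftrightarrow>
     h \<in> {1..length G - 1} \<rightarrow>\<^sub>E {1..length S - 1} \<and>
     (\<forall>v\<in>{1..length G - 1}. cat_clade G v \<subseteq> cat_clade S (h v)) \<and>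
     (\<forall>v1\<in>{1..length G - 1}. \<forall>v2\<in>{1..length G - 1}. v2 \<le> v1 \<longrightarrow> h v2 \<le> h v1)"

definition coal_hists :: "'a list \<Rightarrow> 'a list \<Rightarrow> (nat \<Rightarrow> nat) set" where
  "coal_hists G S = {h. is_coal_hist G S h}"

definition mrca_node :: "'a list \<Rightarrow> 'a set \<Rightarrow> nat" where
  "mrca_node S A = (LEAST i. 1 \<le> i \<and> A \<subseteq> cat_clade S i)"

definition dist_j :: "'a list \<Rightarrow> 'a list \<Rightarrow> nat \<Rightarrow> int" where
  "dist_j G S j = int (length S - 1) - int (mrca_node S (cat_clade G j))"

definition c_j :: "'a list \<Rightarrow> 'a list \<Rightarrow> nat \<Rightarrow> int" where
  "c_j G S j = dist_j G S j - dist_j G S (Suc j)"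

text \<open>Nested sum: nsum c r k = sum over the remaining r levels, where the current
variable has bound k + c r (previous value k).\<close>

primrec nsum :: "(nat \<Rightarrow> int) \<Rightarrow> nat \<Rightarrow> int \<Rightarrow> int" where
  "nsum c 0 k = 1"
| "nsum c (Suc r) k = (\<Sum>k'\<in>{1..k + c (Suc r)}. nsum c r k')"

end

theory Submission
  imports Defs
begin

definition FF :: "(nat \<Rightarrow> nat) \<Rightarrow> nat \<Rightarrow> nat \<Rightarrow> (nat \<Rightarrow> nat) set" where
  "FF m r t = {h. h \<in> {1..r} \<rightarrow>\<^sub>E UNIV \<and> (\<forall>v\<in>{1..r}. m v \<le> h v \<and> h v \<le> t) \<and>
     (\<forall>v1\<in>{1..r}. \<forall>v2\<in>{1..r}. v2 \<le> v1 \<longrightarrow> h v2 \<le> h v1)}"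

lemma FF_finite: "finite (FF m r t)"
proof -
  have "FF m r t \<subseteq> {1..r} \<rightarrow>\<^sub>E {0..t}"
    unfolding FF_def by (auto simp: PiE_def Pi_def)
  moreover have "finite ({1..r} \<rightarrow>\<^sub>E {0..t})" by (intro finite_PiE) auto
  ultimately show ?thesis by (rule finite_subset)
qed

lemma FF_0: "FF m 0 t = {\<lambda>_. undefined}"
  unfolding FF_def by auto

lemma FF_Suc_bij:
  "bij_betw (\<lambda>h. (h (Suc r), h(Suc r := undefined))) (FF m (Suc r) t)
     (SIGMA s:{m (Suc r)..t}. FF m r s)"
proof (rule bij_betw_byWitness[where f' = "\<lambda>(s, h). h(Suc r := s)"])
  show "\<forall>a\<in>FF m (Suc r) t. (case (a (Suc r), a(Suc r := undefined)) of (s, h) \<Rightarrow> h(Suc r := s)) = a"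
    by auto
  show "\<forall>a'\<in>(SIGMA s:{m (Suc r)..t}. FF m r s).
       (\<lambda>h. (h (Suc r), h(Suc r := undefined))) (case a' of (s, h) \<Rightarrow> h(Suc r := s)) = a'"
  proof
    fix a' assume "a' \<in> (SIGMA s:{m (Suc r)..t}. FF m r s)"
    then obtain s h where a': "a' = (s, h)" and h: "h \<in> FF m r s" by auto
    have "h (Suc r) = undefined" using h unfolding FF_def by (auto simp: PiE_def extensional_def)
    then show "(\<lambda>h. (h (Suc r), h(Suc r := undefined))) (case a' of (s, h) \<Rightarrow> h(Suc r := s)) = a'"
      using a' by auto
  qed
  show "(\<lambda>h. (h (Suc r), h(Suc r := undefined))) ` FF m (Suc r) t \<subseteq> (SIGMA s:{m (Suc r)..t}. FF m r s)"
  proof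
    fix x assume "x \<in> (\<lambda>h. (h (Suc r), h(Suc r := undefined))) ` FF m (Suc r) t"
    then obtain h where x: "x = (h (Suc r), h(Suc r := undefined))" and h: "h \<in> FF m (Suc r) t" by auto
    from h have hS: "m (Suc r) \<le> h (Suc r)" "h (Suc r) \<le> t" unfolding FF_def by auto
    have "h(Suc r := undefined) \<in> FF m r (h (Suc r))"
      using h unfolding FF_def
      by (auto simp: PiE_def Pi_def extensional_def)
    then show "x \<in> (SIGMA s:{m (Suc r)..t}. FF m r s)" using x hS by auto
  qed
  show "(\<lambda>(s, h). h(Suc r := s)) ` (SIGMA s:{m (Suc r)..t}. FF m r s) \<subseteq> FF m (Suc r) t"
  proof
    fix x assume "x \<in> (\<lambda>(s, h). h(Suc r := s)) ` (SIGMA s:{m (Suc r)..t}. FF m r s)"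
    then obtain s h where x: "x = h(Suc r := s)" and s: "m (Suc r) \<le> s" "s \<le> t" and h: "h \<in> FF m r s"
      by auto
    from h have h1: "h \<in> {1..r} \<rightarrow>\<^sub>E UNIV" and h2: "\<forall>v\<in>{1..r}. m v \<le> h v \<and> h v \<le> s"
      and h3: "\<forall>v1\<in>{1..r}. \<forall>v2\<in>{1..r}. v2 \<le> v1 \<longrightarrow> h v2 \<le> h v1"
      unfolding FF_def by auto
    have "x \<in> {1..Suc r} \<rightarrow>\<^sub>E UNIV" using h1 unfolding x by (auto simp: PiE_def extensional_def)
    moreover have "\<forall>v\<in>{1..Suc r}. m v \<le> x v \<and> x v \<le> t"
      using h2 s unfolding x by (auto simp: le_Suc_eq intro: order_trans)
    moreover have "\<forall>v1\<in>{1..Suc r}. \<forall>v2\<in>{1..Suc r}. v2 \<le> v1 \<longrightarrow> x v2 \<le> x v1"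
      using h2 h3 s unfolding x by (auto simp: le_Suc_eq)
    ultimately show "x \<in> FF m (Suc r) t" unfolding FF_def by blast
  qed
qed

lemma FF_count:
  assumes c: "\<And>r. c r = int (m (Suc r)) - int (m r)"
  shows "m (Suc r) \<le> t \<Longrightarrow> int (card (FF m r t)) = nsum c r (int t - int (m (Suc r)) + 1)"
proof (induction r arbitrary: t)
  case 0
  then show ?case by (simp add: FF_0)
next
  case (Suc r)
  have "card (FF m (Suc r) t) = card (SIGMA s:{m (Suc r)..t}. FF m r s)"
    using FF_Suc_bij by (rule bij_betw_same_card)
  also have "\<dots> = (\<Sum>s\<in>{m (Suc r)..t}. card (FF m r s))"
    by (rule card_SigmaI) (auto simp: FF_finite)
  finally have "int (card (FF m (Suc r) t)) = (\<Sum>s\<in>{m (Suc r)..t}. int (card (FF m r s)))"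
    by simp
  also have "\<dots> = (\<Sum>s\<in>{m (Suc r)..t}. nsum c r (int s - int (m (Suc r)) + 1))"
    by (rule sum.cong) (auto intro: Suc.IH)
  also have "\<dots> = (\<Sum>k\<in>{1..int t - int (m (Suc r)) + 1}. nsum c r k)"
    by (rule sum.reindex_bij_witness[where i = "\<lambda>k. nat (k + int (m (Suc r)) - 1)"
          and j = "\<lambda>s. int s - int (m (Suc r)) + 1"]) auto
  also have "\<dots> = nsum c (Suc r) (int t - int (m (Suc (Suc r))) + 1)"
  proof -
    have "int t - int (m (Suc (Suc r))) + 1 + c (Suc r) = int t - int (m (Suc r)) + 1"
      by (simp add: c)
    then show ?thesis by (simp only: nsum.simps)
  qed
  finally show ?case .
qed

lemma clade_mono: "i \<le> j \<Longrightarrow> cat_clade xs i \<subseteq> cat_clade xs j"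
  unfolding cat_clade_def by (rule set_take_subset_set_take) simp

lemma clade_full: "length xs \<le> Suc i \<Longrightarrow> cat_clade xs i = set xs"
  unfolding cat_clade_def by simp

lemma clade_sub: "cat_clade xs i \<subseteq> set xs"
  unfolding cat_clade_def by (rule set_take_subset)

theorem proposition4:
  fixes G S :: "'a list" and n :: nat
  assumes "n \<ge> 3"
    and "length G = n" and "length S = n"
    and "distinct G" and "distinct S"
    and "set G = set S"
  shows "int (card (coal_hists G S)) = (\<Sum>k1\<in>{1..1::int}. nsum (c_j G S) (n - 2) k1)"
proof -
  define N where "N = n - 1"
  have nN: "n = Suc N" using assms(1) unfolding N_def by simp
  define m where "m v = mrca_node S (cat_clade G v)" for v
  have PN: "1 \<le> N \<and> cat_clade G v \<subseteq> cat_clade S N" for v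
    using clade_sub[of G v] clade_full[of S N] assms nN by auto
  have mle: "m v \<le> N" for v
    unfolding m_def mrca_node_def by (rule Least_le) (rule PN)
  have mP: "1 \<le> m v \<and> cat_clade G v \<subseteq> cat_clade S (m v)" for v
    unfolding m_def mrca_node_def by (rule LeastI) (rule PN)
  have iff: "1 \<le> i \<Longrightarrow> (cat_clade G v \<subseteq> cat_clade S i) \<longleftrightarrow> m v \<le> i" for v i
  proof
    assume "1 \<le> i" "cat_clade G v \<subseteq> cat_clade S i"
    then show "m v \<le> i" unfolding m_def mrca_node_def by (intro Least_le) simp
  next
    assume "m v \<le> i"
    then show "cat_clade G v \<subseteq> cat_clade S i" using mP[of v] clade_mono[of "m v" i S] by blast
  qed
  have mfull: "m v = N" if "N \<le> v" for v
  proof (rule ccontr)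
    assume "m v \<noteq> N"
    then have lt: "m v < N" using mle[of v] by simp
    have "cat_clade G v = set G" using clade_full[of G v] that assms nN by simp
    then have "set G \<subseteq> cat_clade S (m v)" using mP[of v] by simp
    then have "card (set G) \<le> card (cat_clade S (m v))" by (intro card_mono) (auto simp: cat_clade_def)
    also have "\<dots> \<le> length (take (Suc (m v)) S)" unfolding cat_clade_def by (rule card_length)
    also have "\<dots> \<le> Suc (m v)" by simp
    finally show False using distinct_card[OF assms(4)] assms nN lt by simp
  qed
  have cj: "c_j G S r = int (m (Suc r)) - int (m r)" for r
    unfolding c_j_def dist_j_def m_def by simp
  have eq: "coal_hists G S = FF m N N"
  proof -
    have "is_coal_hist G S h \<longleftrightarrow> h \<in> FF m N N" for h
    proof -
      have l: "length G - 1 = N" "length S - 1 = N" using assms nN by auto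
      have "(h \<in> {1..N} \<rightarrow>\<^sub>E {1..N} \<and> (\<forall>v\<in>{1..N}. cat_clade G v \<subseteq> cat_clade S (h v)))
          \<longleftrightarrow> (h \<in> {1..N} \<rightarrow>\<^sub>E UNIV \<and> (\<forall>v\<in>{1..N}. m v \<le> h v \<and> h v \<le> N))"
      proof
        assume a: "h \<in> {1..N} \<rightarrow>\<^sub>E {1..N} \<and> (\<forall>v\<in>{1..N}. cat_clade G v \<subseteq> cat_clade S (h v))"
        then have "\<forall>v\<in>{1..N}. m v \<le> h v \<and> h v \<le> N" using iff by (auto simp: PiE_def Pi_def)
        then show "h \<in> {1..N} \<rightarrow>\<^sub>E UNIV \<and> (\<forall>v\<in>{1..N}. m v \<le> h v \<and> h v \<le> N)"
          using a by (auto simp: PiE_def)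
      next
        assume a: "h \<in> {1..N} \<rightarrow>\<^sub>E UNIV \<and> (\<forall>v\<in>{1..N}. m v \<le> h v \<and> h v \<le> N)"
        have "\<forall>v\<in>{1..N}. 1 \<le> h v" using a mP by (meson order_trans)
        then show "h \<in> {1..N} \<rightarrow>\<^sub>E {1..N} \<and> (\<forall>v\<in>{1..N}. cat_clade G v \<subseteq> cat_clade S (h v))"
          using a iff by (auto simp: PiE_def Pi_def)
      qed
      then show ?thesis unfolding is_coal_hist_def FF_def l by blast
    qed
    then show ?thesis unfolding coal_hists_def by auto
  qed
  have "int (card (FF m N N)) = nsum (c_j G S) N (int N - int (m (Suc N)) + 1)"
    by (rule FF_count) (auto simp: cj mfull)
  also have "\<dots> = nsum (c_j G S) N 1" using mfull[of "Suc N"] by simp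
  also have "\<dots> = (\<Sum>k1\<in>{1..1::int}. nsum (c_j G S) (n - 2) k1)"
  proof -
    have N2: "N = Suc (n - 2)" using nN assms(1) by simp
    have "c_j G S N = 0" using cj mfull by simp
    then show ?thesis by (subst N2, simp only: nsum.simps) (simp add: N2[symmetric])
  qed
  finally show ?thesis using eq by simp
qed

end
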